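(* Let $\mathcal{D}$ be a distribution over $\mathcal{X}\times\{0,\ldots,c-1\}$, let $h:\mathcal{X}\to\mathcal{Z}$ be a hypothesis and $\ell:\mathcal{Z}\times\{0,\dots,c-1\}\to\mathbb{R}_{\ge0}$ a loss, so that $\ell(h(x),y)=\sum_{r=0}^{c-1}\{y=r\}\,\ell(h(x),r)$, with $\mathbb{E}_r:=\mathbb{E}_x[\ell(h(x),r)]$ finite for all $r$. Let $(x_1,y_1),\ldots,(x_k,y_k)$ be drawn i.i.d. from $\mathcal{D}$, let $\alpha_r=\frac1k\sum_{i=1}^k\{y_i=r\}$ for $r=0,\dots,c-1$, and let $z=((x_1,\ldots,x_k),\boldsymbol\alpha)$ with $\boldsymbol\alpha=(\alpha_0,\ldots,\alpha_{c-1})$. With $p_r=\mathbb{P}(y=r)$, define $$\ell_b(h,z)=\sum_{r=0}^{c-1}(\alpha_r-p_r)\sum_{i=1}^k\big(\ell(h(x_i),r)-\mathbb{E}_r\big)+\sum_{r=0}^{c-1}p_r\,\mathbb{E}_r.$$ Then $$\mathbb{E}_z[\ell_b(h,z)]=\mathbb{E}_{(x,y)\sim\mathcal{D}}[\ell(h(x),y)],\qquad \mathrm{Var}_z(\ell_b(h,z))\le 64\,\mathbb{E}_x\Big[\Big(\max_{r}\ell(h(x),r)\Big)^2\Big].$$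
   Context: $\{\cdot\}$ denotes the indicator of the predicate; $x$ is distributed as the $\mathcal{X}$-marginal of $\mathcal{D}$; $\mathcal{Z}$ is an arbitrary output space. *)

theory Defs
  imports "HOL-Probability.Probability"
begin

definition emp_freq :: "nat \<Rightarrow> nat \<Rightarrow> (nat \<Rightarrow> 'x \<times> nat) \<Rightarrow> real" where
  "emp_freq k r \<omega> = (1 / real k) * (\<Sum>i<k. if snd (\<omega> i) = r then 1 else 0)"

(* the loss ell_b(h,z), z = ((x_1..x_k), alpha); p r = P(y=r), E r = E_x[ell(h x, r)] *)
definition ell_b :: "('z \<Rightarrow> nat \<Rightarrow> real) \<Rightarrow> ('x \<Rightarrow> 'z) \<Rightarrow> nat \<Rightarrow> nat
    \<Rightarrow> (nat \<Rightarrow> real) \<Rightarrow> (nat \<Rightarrow> real) \<Rightarrow> (nat \<Rightarrow> 'x \<times> nat) \<Rightarrow> real" where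
  "ell_b L h c k p E \<omega> =
     (\<Sum>r<c. (emp_freq k r \<omega> - p r) * (\<Sum>i<k. L (h (fst (\<omega> i))) r - E r))
     + (\<Sum>r<c. p r * E r)"

end

theory Submission
  imports Defs
begin

lemma L0: "(\<Sum>x<k. (if (a::nat) = x then 1 else 0::real)) = (if a < k then 1 else 0)"
  using sum.delta'[OF finite_lessThan, of a "\<lambda>_. 1::real" k] by simp
lemma L0': "(\<Sum>x<k. (if x = (a::nat) then 1 else 0::real)) = (if a < k then 1 else 0)"
  using sum.delta[OF finite_lessThan, of a "\<lambda>_. 1::real" k] by simp
lemma La: "(\<Sum>x<k. (if (a::nat) = x \<and> Q then 1 else 0::real)) = (if a < k \<and> Q then 1 else 0)"
  by (cases Q) (simp_all add: L0)
lemma Lb: "(\<Sum>x<k. (if Q \<and> (a::nat) = x then 1 else 0::real)) = (if a < k \<and> Q then 1 else 0)"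
  by (cases Q) (simp_all add: L0)
lemma Lc: "(\<Sum>x<k. (if Q \<and> x = (a::nat) then 1 else 0::real)) = (if a < k \<and> Q then 1 else 0)"
  by (cases Q) (simp_all add: L0')
lemma Lk: "(\<Sum>x<k. (c * (if (a::nat) = x then 1 else 0::real))) = (if a < k then c else 0)"
  by (simp add: sum_distrib_left[symmetric] L0)
lemma s1: "(\<Sum>j<(k::nat). \<Sum>i<k. \<Sum>j'<k. \<Sum>i'<k. (if j = i \<and> j' = i' then 1 else 0::real)) = real k ^ 2"
  by (simp add: Lb L0 Lk power2_eq_square)
lemma s2: "(\<Sum>j<(k::nat). \<Sum>i<k. \<Sum>j'<k. \<Sum>i'<k. (if j = j' \<and> i = i' then 1 else 0::real)) = real k ^ 2"
  by (simp add: Lb La L0 L0' power2_eq_square)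
lemma s3: "(\<Sum>j<(k::nat). \<Sum>i<k. \<Sum>j'<k. \<Sum>i'<k. (if j = i' \<and> i = j' then 1 else 0::real)) = real k ^ 2"
  by (simp add: La Lb Lc L0 L0' power2_eq_square)

lemma ind3: "0 \<le> (m::real) \<Longrightarrow> A \<or> B \<or> C \<Longrightarrow> m \<le> m * (if A then 1 else 0) + m * (if B then 1 else 0) + m * (if C then 1 else 0)"
  by (cases A; cases B; cases C) auto
lemma ind3': "0 \<le> (m::real) \<Longrightarrow> 0 \<le> m * (if A then 1 else 0) + m * (if B then 1 else 0) + m * (if C then 1 else 0)"
  by (cases A; cases B; cases C) auto

locale L3 =
  fixes D :: "('x \<times> nat) measure" and MX :: "'x measure"
    and h :: "'x \<Rightarrow> 'z" and L :: "'z \<Rightarrow> nat \<Rightarrow> real"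
    and c k :: nat
  assumes D_prob: "prob_space D"
    and D_sets: "sets D = sets (MX \<Otimes>\<^sub>M count_space {..<c})"
    and loss_nonneg: "\<And>z r. 0 \<le> L z r"
    and loss_meas: "\<And>r. r < c \<Longrightarrow> (\<lambda>x. L (h x) r) \<in> borel_measurable MX"
    and E_finite: "\<And>r. r < c \<Longrightarrow> integrable D (\<lambda>q. L (h (fst q)) r)"
    and k_pos: "0 < k"
begin

definition "p r = measure D {q \<in> space D. snd q = r}"
definition "E r = (\<integral>q. L (h (fst q)) r \<partial>D)"
definition "S = PiM {..<k} (\<lambda>_. D)"
definition "a r q = (if snd q = r then 1 else 0) - p r"
definition "lt r q = L (h (fst q)) r - E r"
definition "f q q' = (\<Sum>r<c. a r q * lt r q')"
definition "Mx q = Max ((\<lambda>r. L (h (fst q)) r) ` {..<c})"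
definition "EM = (\<integral>q. Mx q \<partial>D)"

lemma space_D: "space D = space MX \<times> {..<c}"
  using sets_eq_imp_space_eq[OF D_sets] by (simp add: space_pair_measure)

lemma c_pos: "0 < c"
proof -
  have "space D \<noteq> {}" using D_prob prob_space.not_empty by blast
  then show ?thesis using space_D by (cases c) auto
qed

lemma meas_D: "measurable D N = measurable (MX \<Otimes>\<^sub>M count_space {..<c}) N"
  by (rule measurable_cong_sets[OF D_sets refl])

lemma meas_ind: "(\<lambda>q. if snd q = r then 1 else 0 :: real) \<in> borel_measurable D"
  unfolding meas_D by measurable

lemma meas_a: "a r \<in> borel_measurable D"
  unfolding a_def[abs_def] using meas_ind by measurable

lemma meas_L: "r < c \<Longrightarrow> (\<lambda>q. L (h (fst q)) r) \<in> borel_measurable D"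
  unfolding meas_D using loss_meas by measurable

lemma meas_lt: "r < c \<Longrightarrow> lt r \<in> borel_measurable D"
  unfolding lt_def[abs_def] using meas_L by measurable

lemma meas_Mx: "Mx \<in> borel_measurable D"
  unfolding Mx_def[abs_def] by (rule borel_measurable_Max) (auto intro: meas_L)

lemma set_snd: "{q \<in> space D. snd q = r} \<in> sets D"
proof -
  have "{q \<in> space D. snd q = r} = {q \<in> space D. (if snd q = r then 1 else 0 :: real) = 1}"
    by auto
  also have "\<dots> \<in> sets D" using meas_ind by measurable
  finally show ?thesis .
qed

lemma p_nonneg: "0 \<le> p r" unfolding p_def by simp
lemma p_le1: "p r \<le> 1" unfolding p_def using D_prob prob_space.prob_le_1 by blast

lemma sum_p: "(\<Sum>r<c. p r) \<le> 1"
proof -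
  interpret prob_space D by (rule D_prob)
  have "(\<Sum>r<c. p r) = measure D (\<Union>r<c. {q \<in> space D. snd q = r})"
    unfolding p_def
    by (rule finite_measure_finite_Union[symmetric]) (auto simp: set_snd disjoint_family_on_def)
  also have "\<dots> \<le> 1" by simp
  finally show ?thesis .
qed

lemma abs_a: "\<bar>a r q\<bar> \<le> 1"
  using p_nonneg[of r] p_le1[of r] unfolding a_def by auto

lemma sum_ind: "(\<Sum>r<c. (if snd q = r then 1 else 0 :: real)) \<le> 1"
  by (cases "snd q < c") (auto simp: sum.delta)

lemma sum_abs_a: "(\<Sum>r<c. \<bar>a r q\<bar>) \<le> 2"
proof -
  have "(\<Sum>r<c. \<bar>a r q\<bar>) \<le> (\<Sum>r<c. (if snd q = r then 1 else 0 :: real) + p r)"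
    by (rule sum_mono) (use p_nonneg p_le1 in \<open>auto simp: a_def\<close>)
  also have "\<dots> \<le> 2" using sum_ind[of q] sum_p by (simp add: sum.distrib)
  finally show ?thesis .
qed

lemma int_ind: "integrable D (\<lambda>q. if snd q = r then 1 else 0 :: real)"
  "(\<integral>q. (if snd q = r then 1 else 0 :: real) \<partial>D) = p r"
proof -
  interpret prob_space D by (rule D_prob)
  show "integrable D (\<lambda>q. if snd q = r then 1 else 0 :: real)"
    by (intro integrable_const_bound[where B=1]) (auto intro: meas_ind)
  have "(\<integral>q. (if snd q = r then 1 else 0 :: real) \<partial>D) = (\<integral>q. indicator {q \<in> space D. snd q = r} q \<partial>D)"
    by (rule Bochner_Integration.integral_cong) auto
  also have "\<dots> = p r" unfolding p_def using set_snd by (simp add: emeasure_eq_measure)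
  finally show "(\<integral>q. (if snd q = r then 1 else 0 :: real) \<partial>D) = p r" .
qed

lemma int_a: "integrable D (a r)" "(\<integral>q. a r q \<partial>D) = 0"
proof -
  interpret prob_space D by (rule D_prob)
  show "integrable D (a r)" unfolding a_def[abs_def] using int_ind by auto
  show "(\<integral>q. a r q \<partial>D) = 0" unfolding a_def using int_ind[of r] by (simp add: prob_space)
qed

lemma int_lt: "r < c \<Longrightarrow> integrable D (lt r)" "r < c \<Longrightarrow> (\<integral>q. lt r q \<partial>D) = 0"
proof -
  interpret prob_space D by (rule D_prob)
  show "r < c \<Longrightarrow> integrable D (lt r)" unfolding lt_def[abs_def] using E_finite by auto
  show "r < c \<Longrightarrow> (\<integral>q. lt r q \<partial>D) = 0" unfolding lt_def E_def using E_finite by (simp add: prob_space)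
qed

lemma L_le_Mx: "r < c \<Longrightarrow> L (h (fst q)) r \<le> Mx q"
  unfolding Mx_def by (rule Max_ge) auto

lemma Mx_nonneg: "0 \<le> Mx q"
  using L_le_Mx[OF c_pos, of q] loss_nonneg[of "h (fst q)" 0] by linarith

lemma Mx_le_sum: "Mx q \<le> (\<Sum>r<c. L (h (fst q)) r)"
proof -
  have "Mx q \<in> (\<lambda>r. L (h (fst q)) r) ` {..<c}" unfolding Mx_def
    using c_pos by (intro Max_in) auto
  then obtain r where r: "r < c" "Mx q = L (h (fst q)) r" by auto
  then show ?thesis using loss_nonneg by (auto intro!: member_le_sum)
qed

lemma int_Mx: "integrable D Mx"
proof (rule Bochner_Integration.integrable_bound[where f="\<lambda>q. (\<Sum>r<c. L (h (fst q)) r)"])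
  show "integrable D (\<lambda>q. \<Sum>r<c. L (h (fst q)) r)" using E_finite by auto
  show "Mx \<in> borel_measurable D" by (rule meas_Mx)
  show "AE x in D. norm (Mx x) \<le> norm (\<Sum>r<c. L (h (fst x)) r)"
  proof (intro AE_I2)
    fix x show "norm (Mx x) \<le> norm (\<Sum>r<c. L (h (fst x)) r)"
      using Mx_le_sum[of x] Mx_nonneg[of x] by (smt (verit) real_norm_def)
  qed
qed

lemma E_le: "r < c \<Longrightarrow> E r \<le> EM"
  unfolding E_def EM_def using E_finite int_Mx L_le_Mx by (intro integral_mono) auto

lemma E_nonneg: "0 \<le> E r"
  unfolding E_def using loss_nonneg by simp

lemma abs_lt: "r < c \<Longrightarrow> \<bar>lt r q\<bar> \<le> Mx q + EM"
  using E_le[of r] E_nonneg[of r] L_le_Mx[of r q] loss_nonneg[of "h (fst q)" r] Mx_nonneg[of q]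
  unfolding lt_def by auto

lemma EM_nonneg: "0 \<le> EM" unfolding EM_def by (intro integral_nonneg_AE AE_I2 Mx_nonneg)

lemma abs_f: "\<bar>f q q'\<bar> \<le> 2 * (Mx q' + EM)"
proof -
  have "\<bar>f q q'\<bar> \<le> (\<Sum>r<c. \<bar>a r q\<bar> * (Mx q' + EM))"
    unfolding f_def
    by (rule order.trans[OF sum_abs]) (auto simp: abs_mult intro!: sum_mono mult_left_mono abs_lt)
  also have "\<dots> = (\<Sum>r<c. \<bar>a r q\<bar>) * (Mx q' + EM)" by (simp add: sum_distrib_right)
  also have "\<dots> \<le> 2 * (Mx q' + EM)"
    by (rule mult_right_mono[OF sum_abs_a]) (simp add: add_nonneg_nonneg Mx_nonneg EM_nonneg)
  finally show ?thesis .
qed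

lemma S_prob: "prob_space S"
  unfolding S_def using D_prob by (intro prob_space_PiM)

lemma comp_meas: "g \<in> borel_measurable D \<Longrightarrow> m < k \<Longrightarrow> (\<lambda>\<omega>. g (\<omega> m)) \<in> borel_measurable S"
  unfolding S_def by (rule measurable_compose[OF measurable_component_singleton]) auto

lemma comp_int:
  fixes g :: "'x \<times> nat \<Rightarrow> real"
  assumes "m < k" "integrable D g"
  shows "integrable S (\<lambda>\<omega>. g (\<omega> m))" "(\<integral>\<omega>. g (\<omega> m) \<partial>S) = (\<integral>q. g q \<partial>D)"
proof -
  have dis: "distr S D (\<lambda>\<omega>. \<omega> m) = D"
    unfolding S_def using assms D_prob by (intro distr_PiM_component) auto
  have mm: "(\<lambda>\<omega>. \<omega> m) \<in> measurable S D"
    unfolding S_def using assms by (intro measurable_component_singleton) auto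
  have gm: "g \<in> borel_measurable D" using assms by auto
  show "integrable S (\<lambda>\<omega>. g (\<omega> m))"
    using integrable_distr_eq[OF mm gm] dis assms by simp
  show "(\<integral>\<omega>. g (\<omega> m) \<partial>S) = (\<integral>q. g q \<partial>D)"
    using integral_distr[OF mm gm] dis by simp
qed

lemma vanish:
  fixes F G :: "(nat \<Rightarrow> 'x \<times> nat) \<Rightarrow> real"
  assumes m: "m < k" and g: "integrable D g" "(\<integral>q. g q \<partial>D) = 0"
    and F: "integrable S F" and FG: "\<And>\<omega>. F \<omega> = g (\<omega> m) * G \<omega>"
    and G: "\<And>\<omega> y. G (fun_upd \<omega> m y) = G \<omega>"
  shows "(\<integral>\<omega>. F \<omega> \<partial>S) = 0"
proof -
  interpret PS: product_sigma_finite "\<lambda>_. D"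
    unfolding product_sigma_finite_def using D_prob
    by (auto intro: prob_space_imp_sigma_finite)
  have I: "{..<k} = insert m ({..<k} - {m})" using m by auto
  have F': "integrable (PiM (insert m ({..<k} - {m})) (\<lambda>_. D)) F"
    using F unfolding S_def by (subst I[symmetric])
  have "(\<integral>\<omega>. F \<omega> \<partial>S) = (\<integral>x. (\<integral>y. F (fun_upd x m y) \<partial>D) \<partial>PiM ({..<k} - {m}) (\<lambda>_. D))"
    unfolding S_def by (subst I) (rule PS.product_integral_insert[OF _ _ F'], auto)
  also have "\<dots> = (\<integral>x. (\<integral>y. g y * G x \<partial>D) \<partial>PiM ({..<k} - {m}) (\<lambda>_. D))"
    by (simp add: FG G)
  also have "\<dots> = 0" using g by simp
  finally show ?thesis .
qed

definition "T \<omega> = (1 / real k) * (\<Sum>j<k. \<Sum>i<k. f (\<omega> j) (\<omega> i))"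
definition "c0 = (\<Sum>r<c. \<integral>q. a r q * lt r q \<partial>D)"

lemma emp_eq: "emp_freq k r \<omega> - p r = (1 / real k) * (\<Sum>j<k. a r (\<omega> j))"
  using k_pos unfolding emp_freq_def a_def by (simp add: sum_subtractf field_simps)

lemma ellb_eq: "ell_b L h c k p E \<omega> = T \<omega> + (\<Sum>r<c. p r * E r)"
proof -
  have "(\<Sum>r<c. (emp_freq k r \<omega> - p r) * (\<Sum>i<k. L (h (fst (\<omega> i))) r - E r))
      = (\<Sum>r<c. (1 / real k) * (\<Sum>j<k. \<Sum>i<k. a r (\<omega> j) * lt r (\<omega> i)))"
    unfolding emp_eq lt_def by (simp add: sum_product mult.assoc)
  also have "\<dots> = (1 / real k) * (\<Sum>r<c. \<Sum>j<k. \<Sum>i<k. a r (\<omega> j) * lt r (\<omega> i))"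
    by (simp add: sum_distrib_left)
  also have "(\<Sum>r<c. \<Sum>j<k. \<Sum>i<k. a r (\<omega> j) * lt r (\<omega> i)) = (\<Sum>j<k. \<Sum>r<c. \<Sum>i<k. a r (\<omega> j) * lt r (\<omega> i))"
    by (rule sum.swap)
  also have "\<dots> = (\<Sum>j<k. \<Sum>i<k. \<Sum>r<c. a r (\<omega> j) * lt r (\<omega> i))"
    by (rule sum.cong[OF refl], rule sum.swap)
  also have "(1 / real k) * \<dots> = T \<omega>" unfolding T_def f_def ..
  finally show ?thesis unfolding ell_b_def by simp
qed

lemma int_alt: "r < c \<Longrightarrow> integrable D (\<lambda>q. a r q * lt r q)"
  by (rule Bochner_Integration.integrable_bound[OF integrable_abs[OF int_lt(1)]])
     (auto intro!: AE_I2 borel_measurable_times[OF meas_a meas_lt] simp: abs_mult intro: mult_left_le_one_le abs_a)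

lemma tint: "j < k \<Longrightarrow> i < k \<Longrightarrow> r < c \<Longrightarrow> integrable S (\<lambda>\<omega>. a r (\<omega> j) * lt r (\<omega> i))"
  by (rule Bochner_Integration.integrable_bound[OF comp_int(1)[of i, OF _ integrable_abs[OF int_lt(1)]]])
     (auto intro!: AE_I2 borel_measurable_times comp_meas meas_a meas_lt simp: abs_mult intro: mult_left_le_one_le abs_a)

lemma tval: "j < k \<Longrightarrow> i < k \<Longrightarrow> r < c \<Longrightarrow>
  (\<integral>\<omega>. a r (\<omega> j) * lt r (\<omega> i) \<partial>S) = (if j = i then (\<integral>q. a r q * lt r q \<partial>D) else 0)"
proof (cases "j = i")
  case True
  assume "j < k" "i < k" "r < c"
  then show ?thesis using True comp_int(2)[OF _ int_alt, of j r] by simp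
next
  case False
  assume "j < k" "i < k" "r < c"
  then show ?thesis using False
    by (simp, intro vanish[where m=j and g="a r" and G="\<lambda>\<omega>. lt r (\<omega> i)"] tint int_a) auto
qed

lemma fint: "j < k \<Longrightarrow> i < k \<Longrightarrow> integrable S (\<lambda>\<omega>. f (\<omega> j) (\<omega> i))"
  unfolding f_def by (intro Bochner_Integration.integrable_sum tint) auto

lemma fval: "j < k \<Longrightarrow> i < k \<Longrightarrow> (\<integral>\<omega>. f (\<omega> j) (\<omega> i) \<partial>S) = (if j = i then c0 else 0)"
  unfolding f_def c0_def by (subst Bochner_Integration.integral_sum) (auto intro: tint simp: tval)

lemma Tint: "integrable S T"
  unfolding T_def by (intro Bochner_Integration.integrable_mult_right Bochner_Integration.integrable_sum fint) auto

lemma Tval: "(\<integral>\<omega>. T \<omega> \<partial>S) = c0"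
proof -
  have "(\<integral>\<omega>. (\<Sum>j<k. \<Sum>i<k. f (\<omega> j) (\<omega> i)) \<partial>S) = (\<Sum>j<k. \<integral>\<omega>. (\<Sum>i<k. f (\<omega> j) (\<omega> i)) \<partial>S)"
    by (rule Bochner_Integration.integral_sum) (auto intro!: fint)
  also have "\<dots> = (\<Sum>j<k. \<Sum>i<k. \<integral>\<omega>. f (\<omega> j) (\<omega> i) \<partial>S)"
    by (intro sum.cong refl Bochner_Integration.integral_sum fint) auto
  also have "\<dots> = (\<Sum>j<k. \<Sum>i<k. (if j = i then c0 else 0))"
    by (intro sum.cong refl fval) auto
  finally have "(\<integral>\<omega>. T \<omega> \<partial>S) = (1 / real k) * (\<Sum>j<k. \<Sum>i<k. (if j = i then c0 else 0))"
    unfolding T_def by simp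
  also have "\<dots> = c0" using k_pos by simp
  finally show ?thesis .
qed

lemma int_indL: "integrable D (\<lambda>q. (if snd q = r then 1 else 0) * L (h (fst q)) r)" if "r < c"
  by (rule Bochner_Integration.integrable_bound[OF E_finite[OF that]])
     (auto intro!: AE_I2 borel_measurable_times meas_ind meas_L that simp: loss_nonneg)

lemma alt_val: "r < c \<Longrightarrow> (\<integral>q. a r q * lt r q \<partial>D) = (\<integral>q. (if snd q = r then 1 else 0) * L (h (fst q)) r \<partial>D) - p r * E r"
proof -
  assume r: "r < c"
  have eq: "\<And>q. a r q * lt r q = (if snd q = r then 1 else 0) * L (h (fst q)) r
      - E r * (if snd q = r then 1 else 0) - p r * L (h (fst q)) r + p r * E r"
    unfolding a_def lt_def by (simp add: algebra_simps)
  have pD: "prob_space D" by (rule D_prob)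
  interpret prob_space D by (rule D_prob)
  have i1: "integrable D (\<lambda>q. (if snd q = r then 1 else 0) * L (h (fst q)) r)" by (rule int_indL[OF r])
  have i2: "integrable D (\<lambda>q. E r * (if snd q = r then 1 else 0))" using int_ind(1)[of r] by simp
  have i3: "integrable D (\<lambda>q. p r * L (h (fst q)) r)" using E_finite[OF r] by simp
  have "(\<integral>q. a r q * lt r q \<partial>D) = (\<integral>q. (if snd q = r then 1 else 0) * L (h (fst q)) r
      - E r * (if snd q = r then 1 else 0) - p r * L (h (fst q)) r \<partial>D) + p r * E r"
    unfolding eq using i1 i2 i3 by (subst Bochner_Integration.integral_add) (auto simp: prob_space)
  also have "\<dots> = (\<integral>q. (if snd q = r then 1 else 0) * L (h (fst q)) r \<partial>D) - E r * p r - p r * E r + p r * E r"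
    using i1 i2 i3 int_ind[of r] by (simp add: E_def)
  finally show ?thesis by simp
qed

lemma sum_ind_mul: "b < c \<Longrightarrow> (\<Sum>r<c. (if b = r then 1 else 0) * X r) = (X b :: real)"
  by (subst sum.cong[OF refl, of _ _ "\<lambda>r. if b = r then X r else 0"]) (auto simp: sum.delta)

lemma part1: "(\<integral>\<omega>. ell_b L h c k p E \<omega> \<partial>S) = (\<integral>q. L (h (fst q)) (snd q) \<partial>D)"
proof -
  have pS: "prob_space S" by (rule S_prob)
  have "(\<integral>\<omega>. ell_b L h c k p E \<omega> \<partial>S) = c0 + (\<Sum>r<c. p r * E r)"
    unfolding ellb_eq using Tint Tval prob_space.prob_space[OF pS] finite_measure.integrable_const[OF prob_space.finite_measure[OF pS]]
    by (subst Bochner_Integration.integral_add) auto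
  also have "\<dots> = (\<Sum>r<c. \<integral>q. (if snd q = r then 1 else 0) * L (h (fst q)) r \<partial>D)"
    unfolding c0_def by (simp add: alt_val sum.distrib[symmetric])
  also have "\<dots> = (\<integral>q. (\<Sum>r<c. (if snd q = r then 1 else 0) * L (h (fst q)) r) \<partial>D)"
    by (rule Bochner_Integration.integral_sum[symmetric]) (auto intro: int_indL)
  also have "\<dots> = (\<integral>q. L (h (fst q)) (snd q) \<partial>D)"
    by (rule Bochner_Integration.integral_cong) (auto simp: space_D sum_ind_mul)
  finally show ?thesis .
qed

lemma ellb_int: "(\<integral>\<omega>. ell_b L h c k p E \<omega> \<partial>S) = c0 + (\<Sum>r<c. p r * E r)"
proof -
  have pS: "prob_space S" by (rule S_prob)
  show ?thesis
    unfolding ellb_eq using Tint Tval prob_space.prob_space[OF pS] finite_measure.integrable_const[OF prob_space.finite_measure[OF pS]]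
    by (subst Bochner_Integration.integral_add) auto
qed

lemma meas_fc: "j < k \<Longrightarrow> i < k \<Longrightarrow> (\<lambda>\<omega>. f (\<omega> j) (\<omega> i)) \<in> borel_measurable S"
  unfolding f_def
  by (intro borel_measurable_sum borel_measurable_times comp_meas meas_a meas_lt) auto

lemma van4:
  fixes \<phi>1 \<phi>2 \<phi>3 \<phi>4 :: "'x \<times> nat \<Rightarrow> real"
  assumes idx: "j < k" "i < k" "j' < k" "i' < k"
    and nP: "\<not> ((j = i \<and> j' = i') \<or> (j = j' \<and> i = i') \<or> (j = i' \<and> i = j'))"
    and i1: "integrable D \<phi>1" "(\<integral>q. \<phi>1 q \<partial>D) = 0"
    and i2: "integrable D \<phi>2" "(\<integral>q. \<phi>2 q \<partial>D) = 0"
    and i3: "integrable D \<phi>3" "(\<integral>q. \<phi>3 q \<partial>D) = 0"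
    and i4: "integrable D \<phi>4" "(\<integral>q. \<phi>4 q \<partial>D) = 0"
    and F: "integrable S (\<lambda>\<omega>. \<phi>1 (\<omega> j) * \<phi>2 (\<omega> i) * (\<phi>3 (\<omega> j') * \<phi>4 (\<omega> i')))"
  shows "(\<integral>\<omega>. \<phi>1 (\<omega> j) * \<phi>2 (\<omega> i) * (\<phi>3 (\<omega> j') * \<phi>4 (\<omega> i')) \<partial>S) = 0"
proof -
  have "(j \<noteq> i \<and> j \<noteq> j' \<and> j \<noteq> i') \<or> (i \<noteq> j \<and> i \<noteq> j' \<and> i \<noteq> i') \<or>
        (j' \<noteq> j \<and> j' \<noteq> i \<and> j' \<noteq> i') \<or> (i' \<noteq> j \<and> i' \<noteq> i \<and> i' \<noteq> j')"
    using nP by auto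
  then show ?thesis
  proof (elim disjE)
    assume u: "j \<noteq> i \<and> j \<noteq> j' \<and> j \<noteq> i'"
    show ?thesis
      by (rule vanish[where m=j and g=\<phi>1 and G="\<lambda>\<omega>. \<phi>2 (\<omega> i) * (\<phi>3 (\<omega> j') * \<phi>4 (\<omega> i'))"])
         (use idx i1 F u in \<open>auto simp: ac_simps\<close>)
  next
    assume u: "i \<noteq> j \<and> i \<noteq> j' \<and> i \<noteq> i'"
    show ?thesis
      by (rule vanish[where m=i and g=\<phi>2 and G="\<lambda>\<omega>. \<phi>1 (\<omega> j) * (\<phi>3 (\<omega> j') * \<phi>4 (\<omega> i'))"])
         (use idx i2 F u in \<open>auto simp: ac_simps\<close>)
  next
    assume u: "j' \<noteq> j \<and> j' \<noteq> i \<and> j' \<noteq> i'"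
    show ?thesis
      by (rule vanish[where m=j' and g=\<phi>3 and G="\<lambda>\<omega>. \<phi>1 (\<omega> j) * (\<phi>2 (\<omega> i) * \<phi>4 (\<omega> i'))"])
         (use idx i3 F u in \<open>auto simp: ac_simps\<close>)
  next
    assume u: "i' \<noteq> j \<and> i' \<noteq> i \<and> i' \<noteq> j'"
    show ?thesis
      by (rule vanish[where m=i' and g=\<phi>4 and G="\<lambda>\<omega>. \<phi>1 (\<omega> j) * (\<phi>2 (\<omega> i) * \<phi>3 (\<omega> j'))"])
         (use idx i4 F u in \<open>auto simp: ac_simps\<close>)
  qed
qed

context
  assumes M2: "integrable D (\<lambda>q. (Mx q)\<^sup>2)"
begin

definition "m2 = (\<integral>q. (Mx q)\<^sup>2 \<partial>D)"
definition "B q = 2 * (Mx q)\<^sup>2 + 2 * EM\<^sup>2"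

lemma EM_sq: "EM\<^sup>2 \<le> m2"
proof -
  interpret prob_space D by (rule D_prob)
  have "0 \<le> variance Mx" by (rule variance_positive)
  also have "variance Mx = m2 - EM\<^sup>2"
    unfolding m2_def EM_def by (rule variance_eq[OF int_Mx M2])
  finally show ?thesis by simp
qed

lemma B_int: "integrable D B"
proof -
  interpret prob_space D by (rule D_prob)
  show ?thesis unfolding B_def[abs_def] using M2 by auto
qed

lemma B_val: "(\<integral>q. B q \<partial>D) \<le> 4 * m2"
proof -
  interpret prob_space D by (rule D_prob)
  have "(\<integral>q. B q \<partial>D) = 2 * m2 + 2 * EM\<^sup>2"
    unfolding B_def m2_def using M2 by (simp add: prob_space)
  then show ?thesis using EM_sq by simp
qed

lemma sq_ineq: "(2 * x) * (2 * y) \<le> 2 * (x\<^sup>2 + y\<^sup>2 :: real)"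
proof -
  have "0 \<le> (x - y)\<^sup>2" by simp
  then show ?thesis by (simp add: power2_eq_square algebra_simps)
qed

lemma sq_ineq2: "(x + y)\<^sup>2 \<le> 2 * x\<^sup>2 + 2 * (y\<^sup>2 :: real)"
proof -
  have "0 \<le> (x - y)\<^sup>2" by simp
  then show ?thesis by (simp add: power2_eq_square algebra_simps)
qed

lemma N_sq: "(Mx q + EM)\<^sup>2 \<le> B q"
  unfolding B_def by (rule sq_ineq2)

definition "F j i j' i' \<omega> = f (\<omega> j) (\<omega> i) * f (\<omega> j') (\<omega> i')"

lemma F_bound: "\<bar>F j i j' i' \<omega>\<bar> \<le> 2 * (B (\<omega> i) + B (\<omega> i'))"
proof -
  have "\<bar>F j i j' i' \<omega>\<bar> \<le> (2 * (Mx (\<omega> i) + EM)) * (2 * (Mx (\<omega> i') + EM))"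
    unfolding F_def abs_mult by (intro mult_mono abs_f abs_ge_zero) (use Mx_nonneg[of "\<omega> i"] EM_nonneg in simp)
  also have "\<dots> \<le> 2 * ((Mx (\<omega> i) + EM)\<^sup>2 + (Mx (\<omega> i') + EM)\<^sup>2)"
    by (rule sq_ineq)
  also have "\<dots> \<le> 2 * (B (\<omega> i) + B (\<omega> i'))" by (intro mult_left_mono add_mono N_sq) auto
  finally show ?thesis .
qed

lemma Bsum_int: "i < k \<Longrightarrow> i' < k \<Longrightarrow> integrable S (\<lambda>\<omega>. 2 * (B (\<omega> i) + B (\<omega> i')))"
  using comp_int(1)[OF _ B_int] by auto

lemma B_nonneg: "0 \<le> B q" unfolding B_def by simp

lemma F_int: "j < k \<Longrightarrow> i < k \<Longrightarrow> j' < k \<Longrightarrow> i' < k \<Longrightarrow> integrable S (F j i j' i')"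
proof (rule Bochner_Integration.integrable_bound[OF Bsum_int])
  assume idx: "j < k" "i < k" "j' < k" "i' < k"
  then show "i < k" "i' < k" by auto
  show "F j i j' i' \<in> borel_measurable S"
    unfolding F_def[abs_def] using idx by (intro borel_measurable_times meas_fc) auto
  show "AE x in S. norm (F j i j' i' x) \<le> norm (2 * (B (x i) + B (x i')))"
  proof (rule AE_I2)
    fix x
    have "norm (F j i j' i' x) \<le> 2 * (B (x i) + B (x i'))" using F_bound by simp
    also have "\<dots> \<le> norm (2 * (B (x i) + B (x i')))" by simp
    finally show "norm (F j i j' i' x) \<le> norm (2 * (B (x i) + B (x i')))" .
  qed
qed

lemma F_val_bound: "j < k \<Longrightarrow> i < k \<Longrightarrow> j' < k \<Longrightarrow> i' < k \<Longrightarrow> (\<integral>\<omega>. F j i j' i' \<omega> \<partial>S) \<le> 16 * m2"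
proof -
  assume idx: "j < k" "i < k" "j' < k" "i' < k"
  have "(\<integral>\<omega>. F j i j' i' \<omega> \<partial>S) \<le> (\<integral>\<omega>. 2 * (B (\<omega> i) + B (\<omega> i')) \<partial>S)"
    by (rule Bochner_Integration.integral_mono[OF F_int[OF idx] Bsum_int[OF idx(2,4)]])
       (rule order.trans[OF abs_ge_self F_bound])
  also have "\<dots> = 2 * ((\<integral>q. B q \<partial>D) + (\<integral>q. B q \<partial>D))"
    using idx comp_int[OF _ B_int] by simp
  also have "\<dots> \<le> 16 * m2" using B_val by simp
  finally show ?thesis .
qed


lemma term_int: "j < k \<Longrightarrow> i < k \<Longrightarrow> j' < k \<Longrightarrow> i' < k \<Longrightarrow> r < c \<Longrightarrow> s < c \<Longrightarrow>
  integrable S (\<lambda>\<omega>. a r (\<omega> j) * lt r (\<omega> i) * (a s (\<omega> j') * lt s (\<omega> i')))"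
proof (rule Bochner_Integration.integrable_bound[OF Bsum_int])
  assume idx: "j < k" "i < k" "j' < k" "i' < k" "r < c" "s < c"
  then show "i < k" "i' < k" by auto
  show "(\<lambda>\<omega>. a r (\<omega> j) * lt r (\<omega> i) * (a s (\<omega> j') * lt s (\<omega> i'))) \<in> borel_measurable S"
    using idx by (intro borel_measurable_times comp_meas meas_a meas_lt) auto
  show "AE x in S. norm (a r (x j) * lt r (x i) * (a s (x j') * lt s (x i'))) \<le> norm (2 * (B (x i) + B (x i')))"
  proof (rule AE_I2)
    fix x :: "nat \<Rightarrow> 'x \<times> nat"
    have "norm (a r (x j) * lt r (x i) * (a s (x j') * lt s (x i'))) = \<bar>a r (x j)\<bar> * \<bar>lt r (x i)\<bar> * (\<bar>a s (x j')\<bar> * \<bar>lt s (x i')\<bar>)"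
      by (simp add: abs_mult)
    also have "\<dots> \<le> 1 * (Mx (x i) + EM) * (1 * (Mx (x i') + EM))"
      using idx by (intro mult_mono abs_a abs_lt mult_nonneg_nonneg abs_ge_zero add_nonneg_nonneg Mx_nonneg EM_nonneg) auto
    also have "\<dots> \<le> (2 * (Mx (x i) + EM)) * (2 * (Mx (x i') + EM))"
      using Mx_nonneg[of "x i"] Mx_nonneg[of "x i'"] EM_nonneg by (intro mult_mono) auto
    also have "\<dots> \<le> 2 * ((Mx (x i) + EM)\<^sup>2 + (Mx (x i') + EM)\<^sup>2)" by (rule sq_ineq)
    also have "\<dots> \<le> 2 * (B (x i) + B (x i'))" by (intro mult_left_mono add_mono N_sq) auto
    also have "\<dots> \<le> norm (2 * (B (x i) + B (x i')))" by simp
    finally show "norm (a r (x j) * lt r (x i) * (a s (x j') * lt s (x i'))) \<le> norm (2 * (B (x i) + B (x i')))" .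
  qed
qed

lemma F_zero:
  assumes idx: "j < k" "i < k" "j' < k" "i' < k"
    and nP: "\<not> ((j = i \<and> j' = i') \<or> (j = j' \<and> i = i') \<or> (j = i' \<and> i = j'))"
  shows "(\<integral>\<omega>. F j i j' i' \<omega> \<partial>S) = 0"
proof -
  have eq: "F j i j' i' \<omega> = (\<Sum>r<c. \<Sum>s<c. a r (\<omega> j) * lt r (\<omega> i) * (a s (\<omega> j') * lt s (\<omega> i')))" for \<omega>
    unfolding F_def f_def by (simp add: sum_product)
  have "(\<integral>\<omega>. F j i j' i' \<omega> \<partial>S) = (\<Sum>r<c. \<Sum>s<c. \<integral>\<omega>. a r (\<omega> j) * lt r (\<omega> i) * (a s (\<omega> j') * lt s (\<omega> i')) \<partial>S)"
    unfolding eq using idx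
    by (subst Bochner_Integration.integral_sum, auto intro!: Bochner_Integration.integrable_sum term_int)
       (intro sum.cong refl Bochner_Integration.integral_sum term_int, auto)
  also have "\<dots> = 0"
    using idx nP by (intro sum.neutral ballI van4 int_a int_lt term_int) auto
  finally show ?thesis .
qed

lemma m2_nonneg: "0 \<le> m2" unfolding m2_def by simp

lemma m2_eq: "m2 = (\<integral>q. (Mx q)\<^sup>2 \<partial>D)" unfolding m2_def ..

lemma F_ind: "j < k \<Longrightarrow> i < k \<Longrightarrow> j' < k \<Longrightarrow> i' < k \<Longrightarrow> (\<integral>\<omega>. F j i j' i' \<omega> \<partial>S) \<le>
   16 * m2 * (if j = i \<and> j' = i' then 1 else 0) + 16 * m2 * (if j = j' \<and> i = i' then 1 else 0)
   + 16 * m2 * (if j = i' \<and> i = j' then 1 else 0)"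
proof -
  assume idx: "j < k" "i < k" "j' < k" "i' < k"
  show ?thesis
  proof (cases "(j = i \<and> j' = i') \<or> (j = j' \<and> i = i') \<or> (j = i' \<and> i = j')")
    case True
    show ?thesis
      using ind3[of "16 * m2", OF _ True] m2_nonneg F_val_bound[OF idx] by linarith
  next
    case False
    have "0 \<le> 16 * m2" using m2_nonneg by simp
    from ind3'[OF this, of "j = i \<and> j' = i'" "j = j' \<and> i = i'" "j = i' \<and> i = j'"]
    show ?thesis using F_zero[OF idx False] by linarith
  qed
qed

lemma Tsq: "(T \<omega>)\<^sup>2 = (1 / real k)\<^sup>2 * (\<Sum>j<k. \<Sum>i<k. \<Sum>j'<k. \<Sum>i'<k. F j i j' i' \<omega>)"
proof -
  have "(T \<omega>)\<^sup>2 = (1 / real k)\<^sup>2 * ((\<Sum>j<k. \<Sum>i<k. f (\<omega> j) (\<omega> i)) * (\<Sum>j<k. \<Sum>i<k. f (\<omega> j) (\<omega> i)))"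
    unfolding T_def by (simp only: power_mult_distrib power2_eq_square[of "\<Sum>j<k. \<Sum>i<k. f (\<omega> j) (\<omega> i)"])
  also have "(\<Sum>j<k. \<Sum>i<k. f (\<omega> j) (\<omega> i)) * (\<Sum>j<k. \<Sum>i<k. f (\<omega> j) (\<omega> i))
      = (\<Sum>j<k. \<Sum>i<k. \<Sum>j'<k. \<Sum>i'<k. F j i j' i' \<omega>)"
    unfolding F_def by (simp only: sum_distrib_right) (simp only: sum_distrib_left)
  finally show ?thesis .
qed

lemma Tsq_int: "integrable S (\<lambda>\<omega>. (T \<omega>)\<^sup>2)"
  unfolding Tsq by (intro Bochner_Integration.integrable_mult_right Bochner_Integration.integrable_sum F_int) auto

lemma Tsq_bound: "(\<integral>\<omega>. (T \<omega>)\<^sup>2 \<partial>S) \<le> 48 * m2"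
proof -
  have "(\<integral>\<omega>. (T \<omega>)\<^sup>2 \<partial>S) = (1 / real k)\<^sup>2 * (\<Sum>j<k. \<Sum>i<k. \<Sum>j'<k. \<Sum>i'<k. \<integral>\<omega>. F j i j' i' \<omega> \<partial>S)"
    unfolding Tsq
    by (subst Bochner_Integration.integral_mult_right_zero, rule arg_cong[where f="\<lambda>x. _ * x"],
        subst Bochner_Integration.integral_sum, force intro!: F_int,
        intro sum.cong refl, subst Bochner_Integration.integral_sum, force intro!: F_int,
        intro sum.cong refl, subst Bochner_Integration.integral_sum, force intro!: F_int,
        intro sum.cong refl, subst Bochner_Integration.integral_sum, force intro!: F_int, simp)
  also have "\<dots> \<le> (1 / real k)\<^sup>2 * (\<Sum>j<k. \<Sum>i<k. \<Sum>j'<k. \<Sum>i'<k.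
     16 * m2 * (if j = i \<and> j' = i' then 1 else 0) + 16 * m2 * (if j = j' \<and> i = i' then 1 else 0)
   + 16 * m2 * (if j = i' \<and> i = j' then 1 else 0))"
    by (intro mult_left_mono sum_mono F_ind) auto
  also have "\<dots> = (1 / real k)\<^sup>2 * (16 * m2 * real k ^ 2 + 16 * m2 * real k ^ 2 + 16 * m2 * real k ^ 2)"
    by (simp only: sum.distrib sum_distrib_left[symmetric] s1 s2 s3)
  also have "\<dots> = 48 * m2" using k_pos by (simp add: field_simps)
  finally show ?thesis .
qed

lemma var_bound: "(\<integral>\<omega>. (ell_b L h c k p E \<omega> - (\<integral>\<omega>'. ell_b L h c k p E \<omega>' \<partial>S))\<^sup>2 \<partial>S) \<le> 64 * m2"
proof -
  interpret prob_space S by (rule S_prob)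
  have "(\<integral>\<omega>. (ell_b L h c k p E \<omega> - (\<integral>\<omega>'. ell_b L h c k p E \<omega>' \<partial>S))\<^sup>2 \<partial>S) = variance T"
    unfolding ellb_int Tval by (simp add: ellb_eq)
  also have "\<dots> = expectation (\<lambda>x. (T x)\<^sup>2) - (expectation T)\<^sup>2"
    by (rule variance_eq[OF Tint Tsq_int])
  also have "\<dots> \<le> 48 * m2" using Tsq_bound zero_le_power2[of "expectation T"] by linarith
  also have "\<dots> \<le> 64 * m2" using m2_nonneg by simp
  finally show ?thesis .
qed

end

end

theorem lemma3:
  fixes D :: "('x \<times> nat) measure" and MX :: "'x measure"
    and h :: "'x \<Rightarrow> 'z" and L :: "'z \<Rightarrow> nat \<Rightarrow> real"
    and c k :: nat
  assumes D_prob: "prob_space D"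
    and D_sets: "sets D = sets (MX \<Otimes>\<^sub>M count_space {..<c})"
    and loss_nonneg: "\<And>z r. 0 \<le> L z r"
    and loss_meas: "\<And>r. r < c \<Longrightarrow> (\<lambda>x. L (h x) r) \<in> borel_measurable MX"
    and E_finite: "\<And>r. r < c \<Longrightarrow> integrable D (\<lambda>q. L (h (fst q)) r)"
    and k_pos: "0 < k"
  defines "p \<equiv> (\<lambda>r. measure D {q \<in> space D. snd q = r})"
    and "E \<equiv> (\<lambda>r. \<integral>q. L (h (fst q)) r \<partial>D)"
    and "S \<equiv> PiM {..<k} (\<lambda>_. D)"
  shows "(\<integral>\<omega>. ell_b L h c k p E \<omega> \<partial>S) = (\<integral>q. L (h (fst q)) (snd q) \<partial>D)
    \<and> ennreal (\<integral>\<omega>. (ell_b L h c k p E \<omega> - (\<integral>\<omega>'. ell_b L h c k p E \<omega>' \<partial>S))\<^sup>2 \<partial>S)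
        \<le> 64 * (\<integral>\<^sup>+q. ennreal ((Max ((\<lambda>r. L (h (fst q)) r) ` {..<c}))\<^sup>2) \<partial>D)"
proof -
  interpret I: L3 D MX h L c k
    by (rule L3.intro[where D=D and MX=MX and h=h and L=L and c=c and k=k, OF D_prob D_sets loss_nonneg loss_meas E_finite k_pos])
  have pe: "p = I.p" by (rule ext) (simp add: p_def I.p_def)
  have Ee: "E = I.E" by (rule ext) (simp add: E_def I.E_def)
  have Se: "S = I.S" by (simp add: S_def I.S_def)
  have Mxe: "\<And>q. Max ((\<lambda>r. L (h (fst q)) r) ` {..<c}) = I.Mx q" by (simp add: I.Mx_def)
  have P1: "(\<integral>\<omega>. ell_b L h c k p E \<omega> \<partial>S) = (\<integral>q. L (h (fst q)) (snd q) \<partial>D)"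
    unfolding pe Ee Se by (rule I.part1)
  have P2: "ennreal (\<integral>\<omega>. (ell_b L h c k p E \<omega> - (\<integral>\<omega>'. ell_b L h c k p E \<omega>' \<partial>S))\<^sup>2 \<partial>S)
        \<le> 64 * (\<integral>\<^sup>+q. ennreal ((I.Mx q)\<^sup>2) \<partial>D)"
  proof (cases "(\<integral>\<^sup>+q. ennreal ((I.Mx q)\<^sup>2) \<partial>D) = \<infinity>")
    case True
    then show ?thesis by simp
  next
    case False
    have M2: "integrable D (\<lambda>q. (I.Mx q)\<^sup>2)"
      using False I.meas_Mx by (intro integrableI_nonneg) (auto simp: top.not_eq_extremum)
    have "(\<integral>\<^sup>+q. ennreal ((I.Mx q)\<^sup>2) \<partial>D) = ennreal (I.m2)"
      using nn_integral_eq_integral[OF M2] by (simp add: I.m2_eq[OF M2])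
    moreover have "(\<integral>\<omega>. (ell_b L h c k p E \<omega> - (\<integral>\<omega>'. ell_b L h c k p E \<omega>' \<partial>S))\<^sup>2 \<partial>S) \<le> 64 * I.m2"
      unfolding pe Ee Se by (rule I.var_bound[OF M2])
    moreover have "ennreal (64 * I.m2) = 64 * ennreal I.m2"
      using I.m2_nonneg[OF M2] by (simp add: ennreal_mult)
    ultimately show ?thesis
      by (metis ennreal_leI)
  qed
  show ?thesis using P1 P2 unfolding Mxe by simp
qed

end
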